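(* Let $\mathcal F=(f_t)$ be a continuous flow on a compact metric space $X$, $\varphi\colon X\to\mathbb{R}$ continuous, and $\lambda\colon X\to[0,\infty)$ bounded and lower semicontinuous. For $\eta>0$ let $B(\eta)=\{(x,t)\in X\times[0,\infty): \frac1t\int_0^t\lambda(f_sx)\,ds\le\eta\}$. Then for every $\eta>0$ and every $\varepsilon>0$, $P([B(\eta)],\varphi)\le P(B(\eta+\varepsilon),\varphi)$.
   Context: For $\mathcal C\subset X\times[0,\infty)$, $[\mathcal C]=\{(x,n)\in X\times\mathbb N: (f_{-s}x,n+s+t)\in\mathcal C\text{ for some }s,t\in[0,1]\}$. For a collection $\mathcal C$ of orbit segments, with $\mathcal C_t=\{x:(x,t)\in\mathcal C\}$: $\Lambda_t(\mathcal C,\varphi,\varepsilon)=\sup\{\sum_{x\in E}e^{\int_0^t\varphi(f_sx)ds}: E\subset\mathcal C_t\ (t,\varepsilon)\text{-separated}\}$, $P(\mathcal C,\varphi,\varepsilon)=\limsup_{t\to\infty}\frac1t\log\Lambda_t(\mathcal C,\varphi,\varepsilon)$, $P(\mathcal C,\varphi)=\lim_{\varepsilon\to0}P(\mathcal C,\varphi,\varepsilon)$. *)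

theory Defs
  imports "HOL-Analysis.Analysis"
begin

definition continuous_flow :: "'a::metric_space set \<Rightarrow> (real \<Rightarrow> 'a \<Rightarrow> 'a) \<Rightarrow> bool" where
  "continuous_flow X f \<longleftrightarrow>
     (\<forall>t. \<forall>x\<in>X. f t x \<in> X) \<and>
     (\<forall>x\<in>X. f 0 x = x) \<and>
     (\<forall>s t. \<forall>x\<in>X. f (s + t) x = f s (f t x)) \<and>
     continuous_on (UNIV \<times> X) (\<lambda>(t, x). f t x)"

definition lsc_on :: "'a::topological_space set \<Rightarrow> ('a \<Rightarrow> real) \<Rightarrow> bool" where
  "lsc_on X g \<longleftrightarrow> (\<forall>a. openin (top_of_set X) {x\<in>X. a < g x})"

definition bowen_dist :: "(real \<Rightarrow> 'a \<Rightarrow> 'a) \<Rightarrow> real \<Rightarrow> 'a::metric_space \<Rightarrow> 'a \<Rightarrow> real" where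
  "bowen_dist f t x y = (SUP s\<in>{0..t}. dist (f s x) (f s y))"

definition separated :: "(real \<Rightarrow> 'a \<Rightarrow> 'a) \<Rightarrow> real \<Rightarrow> real \<Rightarrow> 'a::metric_space set \<Rightarrow> bool" where
  "separated f t \<epsilon> E \<longleftrightarrow> (\<forall>x\<in>E. \<forall>y\<in>E. x \<noteq> y \<longrightarrow> bowen_dist f t x y > \<epsilon>)"

definition slice :: "('a \<times> real) set \<Rightarrow> real \<Rightarrow> 'a set" where
  "slice C t = {x. (x, t) \<in> C}"

text \<open>Lambda_t(C, phi, eps) (in the extended reals; separated sets in a compact
  space are finite, so the supremum is over finite separated subsets).\<close>
definition Lambda :: "(real \<Rightarrow> 'a::metric_space \<Rightarrow> 'a) \<Rightarrow> ('a \<times> real) set \<Rightarrow> ('a \<Rightarrow> real) \<Rightarrow> real \<Rightarrow> real \<Rightarrow> ereal" where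
  "Lambda f C \<phi> \<epsilon> t =
     (SUP E\<in>{E. finite E \<and> E \<subseteq> slice C t \<and> separated f t \<epsilon> E}.
        ereal (\<Sum>x\<in>E. exp (integral {0..t} (\<lambda>s. \<phi> (f s x)))))"

definition eln :: "ereal \<Rightarrow> ereal" where
  "eln a = (if a \<le> 0 then -\<infinity> else if a = \<infinity> then \<infinity> else ereal (ln (real_of_ereal a)))"

definition pressure_eps :: "(real \<Rightarrow> 'a::metric_space \<Rightarrow> 'a) \<Rightarrow> ('a \<times> real) set \<Rightarrow> ('a \<Rightarrow> real) \<Rightarrow> real \<Rightarrow> ereal" where
  "pressure_eps f C \<phi> \<epsilon> = Limsup at_top (\<lambda>t. eln (Lambda f C \<phi> \<epsilon> t) / ereal t)"

definition pressure :: "(real \<Rightarrow> 'a::metric_space \<Rightarrow> 'a) \<Rightarrow> ('a \<times> real) set \<Rightarrow> ('a \<Rightarrow> real) \<Rightarrow> ereal" where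
  "pressure f C \<phi> = Lim (at_right 0) (\<lambda>\<epsilon>. pressure_eps f C \<phi> \<epsilon>)"

text \<open>[C]: orbit segments with integer length obtained by trimming at most 1 from each end.\<close>
definition discretize :: "'a set \<Rightarrow> (real \<Rightarrow> 'a \<Rightarrow> 'a) \<Rightarrow> ('a \<times> real) set \<Rightarrow> ('a \<times> real) set" where
  "discretize X f C = {(x, real n) | x n. x \<in> X \<and> (\<exists>s\<in>{0..1}. \<exists>t\<in>{0..1}. (f (- s) x, real n + s + t) \<in> C)}"

definition Bset :: "'a set \<Rightarrow> (real \<Rightarrow> 'a \<Rightarrow> 'a) \<Rightarrow> ('a \<Rightarrow> real) \<Rightarrow> real \<Rightarrow> ('a \<times> real) set" where
  "Bset X f lam \<eta> = {(x, t). x \<in> X \<and> 0 \<le> t \<and> (1 / t) * integral {0..t} (\<lambda>s. lam (f s x)) \<le> \<eta>}"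

end

theory Submission
  imports Defs
begin

lemma lsc_meas:
  fixes g :: "real \<Rightarrow> real"
  assumes "\<And>a. open {u. a < g u}" and S: "S \<in> sets lebesgue"
  shows "g \<in> borel_measurable (lebesgue_on S)"
proof -
  have "{w \<in> space (lebesgue_on S). a < g w} \<in> sets (lebesgue_on S)" for a
  proof -
    have "{w \<in> space (lebesgue_on S). a < g w} = S \<inter> {u. a < g u}" by auto
    moreover have "S \<inter> {u. a < g u} \<in> sets lebesgue"
      using S assms(1)[of a] by (simp add: borel_open sets.Int lebesgue_openin)
    ultimately show ?thesis using S by (simp add: sets_restrict_space_iff)
  qed
  then show ?thesis by (simp add: borel_measurable_iff_greater)
qed

lemma orbit_integrable:
  fixes X :: "'a::metric_space set" and f :: "real \<Rightarrow> 'a \<Rightarrow> 'a"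
  assumes "continuous_flow X f" "bounded (lam ` X)" "lsc_on X lam" "y \<in> X"
  shows "(\<lambda>u. lam (f u y)) integrable_on {a..b}"
proof -
  have fX: "\<And>u. f u y \<in> X" using assms(1,4) unfolding continuous_flow_def by blast
  have c2: "continuous_on (UNIV \<times> X) (\<lambda>(t, x). f t x)"
    using assms(1) unfolding continuous_flow_def by blast
  have cu: "continuous_on UNIV (\<lambda>u. (u, y))" by (intro continuous_intros)
  have "continuous_on UNIV (\<lambda>u. (\<lambda>(t, x). f t x) (u, y))"
    by (rule continuous_on_compose2[OF c2 cu]) (use assms(4) in auto)
  then have cont: "continuous_on UNIV (\<lambda>u. f u y)" by simp
  have pi: "(\<lambda>u. f u y) \<in> UNIV \<rightarrow> X" using fX by auto
  have all: "\<forall>U. openin (top_of_set X) U \<longrightarrow> openin (top_of_set UNIV) (UNIV \<inter> (\<lambda>u. f u y) -` U)"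
    using continuous_on_open_gen[OF pi] cont by (rule iffD1)
  have op: "open {u. a' < lam (f u y)}" for a'
  proof -
    have oX: "openin (top_of_set X) {x\<in>X. a' < lam x}" using assms(3) unfolding lsc_on_def by blast
    have "openin (top_of_set UNIV) (UNIV \<inter> (\<lambda>u. f u y) -` {x\<in>X. a' < lam x})"
      using all oX by blast
    moreover have "UNIV \<inter> (\<lambda>u. f u y) -` {x\<in>X. a' < lam x} = {u. a' < lam (f u y)}"
      using fX by blast
    ultimately show ?thesis by simp
  qed
  obtain B where B: "\<And>x. x \<in> X \<Longrightarrow> norm (lam x) \<le> B"
    using assms(2) unfolding bounded_iff by blast
  have meas: "(\<lambda>u. lam (f u y)) \<in> borel_measurable (lebesgue_on {a..b})"
    by (rule lsc_meas[OF op]) simp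
  show ?thesis
  proof (rule measurable_bounded_by_integrable_imp_integrable[OF meas])
    show "(\<lambda>_. B) integrable_on {a..b}" by (rule integrable_const_ivl)
    show "norm (lam (f u y)) \<le> B" if "u \<in> {a..b}" for u using B fX by blast
  qed simp
qed

lemma Lambda_mono_C:
  assumes "slice C1 t \<subseteq> slice C2 t"
  shows "Lambda f C1 \<phi> e t \<le> Lambda f C2 \<phi> e t"
  unfolding Lambda_def by (rule SUP_subset_mono) (use assms in auto)

lemma sep_mono: "separated f t e2 E \<Longrightarrow> e1 \<le> e2 \<Longrightarrow> separated f t e1 E"
  unfolding separated_def by (meson order_le_less_trans)

lemma Lambda_mono_eps:
  assumes "e1 \<le> e2"
  shows "Lambda f C \<phi> e2 t \<le> Lambda f C \<phi> e1 t"
  unfolding Lambda_def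
  by (rule SUP_subset_mono) (use assms sep_mono in auto)

lemma eln_mono: "a \<le> b \<Longrightarrow> eln a \<le> eln b"
  unfolding eln_def
  by (cases a; cases b) auto

lemma pe_mono_C:
  assumes "\<forall>\<^sub>F t in at_top. slice C1 t \<subseteq> slice C2 t"
  shows "pressure_eps f C1 \<phi> e \<le> pressure_eps f C2 \<phi> e"
  unfolding pressure_eps_def
proof (rule Limsup_mono)
  show "\<forall>\<^sub>F t in at_top. eln (Lambda f C1 \<phi> e t) / ereal t \<le> eln (Lambda f C2 \<phi> e t) / ereal t"
    using assms eventually_gt_at_top[of 0]
  proof eventually_elim
    case (elim t)
    then show ?case
    proof -
      have "Lambda f C1 \<phi> e t \<le> Lambda f C2 \<phi> e t" by (rule Lambda_mono_C) (use elim in simp)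
      then have "eln (Lambda f C1 \<phi> e t) \<le> eln (Lambda f C2 \<phi> e t)" by (rule eln_mono)
      then show ?thesis by (rule ereal_divide_right_mono) (use elim in simp)
    qed
  qed
qed

lemma pe_mono_eps:
  assumes "e1 \<le> e2"
  shows "pressure_eps f C \<phi> e2 \<le> pressure_eps f C \<phi> e1"
  unfolding pressure_eps_def
proof (rule Limsup_mono)
  show "\<forall>\<^sub>F t in at_top. eln (Lambda f C \<phi> e2 t) / ereal t \<le> eln (Lambda f C \<phi> e1 t) / ereal t"
    using eventually_gt_at_top[of 0]
  proof eventually_elim
    case (elim t)
    then show ?case
    proof -
      have "Lambda f C \<phi> e2 t \<le> Lambda f C \<phi> e1 t" by (rule Lambda_mono_eps[OF assms])
      then have "eln (Lambda f C \<phi> e2 t) \<le> eln (Lambda f C \<phi> e1 t)" by (rule eln_mono)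
      then show ?thesis by (rule ereal_divide_right_mono) (use elim in simp)
    qed
  qed
qed

lemma pressure_tendsto:
  "((\<lambda>e. pressure_eps f C \<phi> e) \<longlongrightarrow> (SUP e\<in>{0<..}. pressure_eps f C \<phi> e)) (at_right 0)"
proof (rule increasing_tendsto)
  show "\<forall>\<^sub>F n in at_right 0. pressure_eps f C \<phi> n \<le> (SUP e\<in>{0<..}. pressure_eps f C \<phi> e)"
    using eventually_at_right_less[of 0]
  proof eventually_elim
    case (elim n)
    then show ?case by (intro SUP_upper) simp
  qed
next
  fix x assume "x < (SUP e\<in>{0<..}. pressure_eps f C \<phi> e)"
  then obtain e0 where e0: "e0 > (0::real)" "x < pressure_eps f C \<phi> e0"
    by (auto simp: less_SUP_iff)
  have "\<forall>\<^sub>F n in at_right 0. n \<in> {0<..<e0}" using eventually_at_right_real[OF e0(1)] .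
  then show "\<forall>\<^sub>F n in at_right 0. x < pressure_eps f C \<phi> n"
  proof eventually_elim
    case (elim n)
    have "pressure_eps f C \<phi> e0 \<le> pressure_eps f C \<phi> n"
      by (rule pe_mono_eps) (use elim in simp)
    with e0(2) show ?case by (rule less_le_trans)
  qed
qed

lemma pressure_le:
  assumes "\<And>e. pressure_eps f C1 \<phi> e \<le> pressure_eps f C2 \<phi> e"
  shows "pressure f C1 \<phi> \<le> pressure f C2 \<phi>"
proof -
  have l1: "pressure f C1 \<phi> = (SUP e\<in>{0<..}. pressure_eps f C1 \<phi> e)"
    unfolding pressure_def by (rule tendsto_Lim[OF _ pressure_tendsto]) simp
  have l2: "pressure f C2 \<phi> = (SUP e\<in>{0<..}. pressure_eps f C2 \<phi> e)"
    unfolding pressure_def by (rule tendsto_Lim[OF _ pressure_tendsto]) simp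
  show ?thesis unfolding l1 l2 by (rule SUP_mono) (use assms in auto)
qed

theorem lemma3p5:
  fixes X :: "'a::metric_space set" and f :: "real \<Rightarrow> 'a \<Rightarrow> 'a"
    and \<phi> lam :: "'a \<Rightarrow> real" and \<eta> \<epsilon> :: real
  assumes "compact X"
    and "continuous_flow X f"
    and "continuous_on X \<phi>"
    and "\<forall>x\<in>X. 0 \<le> lam x" and "bounded (lam ` X)" and "lsc_on X lam"
    and "\<eta> > 0" and "\<epsilon> > 0"
  shows "pressure f (discretize X f (Bset X f lam \<eta>)) \<phi> \<le> pressure f (Bset X f lam (\<eta> + \<epsilon>)) \<phi>"
proof (rule pressure_le, rule pe_mono_C)
  have fl: "\<And>t x. x \<in> X \<Longrightarrow> f t x \<in> X" "\<And>x. x \<in> X \<Longrightarrow> f 0 x = x"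
    "\<And>s t x. x \<in> X \<Longrightarrow> f (s + t) x = f s (f t x)"
    using assms(2) unfolding continuous_flow_def by simp_all
  show "\<forall>\<^sub>F t in at_top. slice (discretize X f (Bset X f lam \<eta>)) t \<subseteq> slice (Bset X f lam (\<eta> + \<epsilon>)) t"
    using eventually_ge_at_top[of "max 1 (2 * \<eta> / \<epsilon>)"]
  proof eventually_elim
    case (elim T)
    show ?case
    proof
      fix x assume "x \<in> slice (discretize X f (Bset X f lam \<eta>)) T"
      then obtain n s t where xX: "x \<in> X" and Tn: "T = real n" and s: "s \<in> {0..1}" and t: "t \<in> {0..1}"
        and yB: "(f (- s) x, real n + s + t) \<in> Bset X f lam \<eta>"
        unfolding slice_def discretize_def by blast
      define y where "y = f (- s) x"
      define L where "L = real n + s + t"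
      define g where "g = (\<lambda>u. lam (f u y))"
      have yX: "y \<in> X" using fl(1)[OF xX] y_def by simp
      have n1: "real n \<ge> 1" and n2: "real n \<ge> 2 * \<eta> / \<epsilon>" using elim Tn by auto
      have Lpos: "L > 0" using n1 s t L_def by auto
      have avg: "(1 / L) * integral {0..L} g \<le> \<eta>"
        using yB unfolding Bset_def y_def[symmetric] L_def[symmetric] g_def by auto
      have int_le: "integral {0..L} g \<le> \<eta> * L"
        using avg Lpos by (simp add: field_simps)
      have fx: "f u x = f (u + s) y" for u
      proof -
        have "f s y = f (s + - s) x" unfolding y_def by (rule fl(3)[OF xX, symmetric])
        also have "\<dots> = x" using fl(2)[OF xX] by simp
        finally have "f s y = x" .
        then show ?thesis using fl(3)[OF yX, of u s] by simp
      qed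
      have "integral {0..real n} (\<lambda>u. lam (f u x)) = integral {0..real n} (g \<circ> (+) s)"
        by (rule integral_cong) (simp add: g_def fx add.commute)
      also have "\<dots> = integral {s..real n + s} g"
        using integral_shift_Icc_real[where f=g and a=0 and b="real n" and c=s] by simp
      also have "\<dots> \<le> integral {0..L} g"
      proof (rule integral_subset_le)
        show "{s..real n + s} \<subseteq> {0..L}" using s t L_def by auto
        show "g integrable_on {s..real n + s}" "g integrable_on {0..L}"
          unfolding g_def using orbit_integrable[OF assms(2) assms(5) assms(6) yX] by auto
        show "\<forall>x\<in>{0..L}. 0 \<le> g x" using assms(4) fl(1)[OF yX] g_def by auto
      qed
      also have "\<dots> \<le> \<eta> * L" by (rule int_le)
      also have "\<dots> \<le> \<eta> * (real n + 2)" using s t L_def assms(7) by (intro mult_left_mono) auto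
      also have "\<dots> \<le> (\<eta> + \<epsilon>) * real n"
      proof -
        have "2 * \<eta> \<le> \<epsilon> * real n" using n2 assms(8) by (simp add: field_simps)
        then show ?thesis by (simp add: algebra_simps)
      qed
      finally have "integral {0..real n} (\<lambda>u. lam (f u x)) \<le> (\<eta> + \<epsilon>) * real n" .
      then have "(1 / real n) * integral {0..real n} (\<lambda>u. lam (f u x)) \<le> \<eta> + \<epsilon>"
        using n1 by (simp add: field_simps)
      then show "x \<in> slice (Bset X f lam (\<eta> + \<epsilon>)) T"
        unfolding slice_def Bset_def using xX Tn by auto
    qed
  qed
qed

end
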